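(* Let $G=(V,E)$ be a connected undirected graph with labeled nodes $1,\dots,n_l$ ($1\le n_l<n$) and edge costs $d_e>0$, and let $p$ be an unlabeled node. Suppose there is a unique path of minimal total cost $\sum_e d_e$ among all paths from the set of labeled nodes to $p$, and let $i^*(p)$ be its labeled endpoint. Then as $\lambda\to\infty$, the flow-based prediction weights satisfy $w_{i^*(p)}(p)\to1$ and $w_i(p)\to0$ for all $i\ne i^*(p)$; i.e. the flow-based prediction converges to the 1-nearest-neighbor prediction $f(i^*(p))$ (nearest with respect to shortest-path distance with edge lengths $d_e$).
   Context: Orient each edge arbitrarily; let $A$ be the $n\times m$ signed incidence matrix ($A_{ie}=+1$, $A_{je}=-1$ for $e$ oriented from $i$ to $j$), $A_l$ its rows $1,\dots,n_l$, $A_u$ its remaining rows. For unlabeled $p$, $\vec b_p\in\mathbb R^{n-n_l}$ is zero except $-1$ at the entry of $p$. For $\lambda\ge0$, the flow $\vec x$ is the unique minimizer of $\frac12\sum_{e=1}^m d_e(x_e^2+\lambda|x_e|)$ subject to $A_u\vec x=\vec b_p$; the weights are $\vec w(p)=A_l\vec x$ and the prediction is $f(p)=\sum_{i=1}^{n_l}w_i(p)f(i)$. *)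

theory Defs
  imports "HOL-Analysis.Analysis"
begin

text \<open>Graph: vertices 0..<n (labeled ones are 0..<nl), edges 0..<m; edge e joins
  src e and tgt e and is oriented from src e to tgt e.\<close>

definition incid :: "(nat \<Rightarrow> nat) \<Rightarrow> (nat \<Rightarrow> nat) \<Rightarrow> nat \<Rightarrow> nat \<Rightarrow> real" where
  "incid src tgt v e = (if src e = v then 1 else if tgt e = v then -1 else 0)"

definition is_path :: "nat \<Rightarrow> (nat \<Rightarrow> nat) \<Rightarrow> (nat \<Rightarrow> nat) \<Rightarrow> nat list \<Rightarrow> nat list \<Rightarrow> bool" where
  "is_path m src tgt vs es \<longleftrightarrow>
     length vs = length es + 1 \<and> distinct vs \<and>
     (\<forall>k < length es. es ! k < m \<and> {src (es ! k), tgt (es ! k)} = {vs ! k, vs ! Suc k})"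

definition connected_graph :: "nat \<Rightarrow> nat \<Rightarrow> (nat \<Rightarrow> nat) \<Rightarrow> (nat \<Rightarrow> nat) \<Rightarrow> bool" where
  "connected_graph n m src tgt \<longleftrightarrow>
     (\<forall>u < n. \<forall>v < n. \<exists>vs es. is_path m src tgt vs es \<and> hd vs = u \<and> last vs = v)"

definition path_cost :: "(nat \<Rightarrow> real) \<Rightarrow> nat list \<Rightarrow> real" where
  "path_cost d es = sum_list (map d es)"

definition lab_path :: "nat \<Rightarrow> nat \<Rightarrow> (nat \<Rightarrow> nat) \<Rightarrow> (nat \<Rightarrow> nat) \<Rightarrow> nat \<Rightarrow> nat list \<Rightarrow> nat list \<Rightarrow> bool" where
  "lab_path nl m src tgt p vs es \<longleftrightarrow> is_path m src tgt vs es \<and> hd vs < nl \<and> last vs = p"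

definition feasible_flow :: "nat \<Rightarrow> nat \<Rightarrow> nat \<Rightarrow> (nat \<Rightarrow> nat) \<Rightarrow> (nat \<Rightarrow> nat) \<Rightarrow> nat \<Rightarrow> (nat \<Rightarrow> real) \<Rightarrow> bool" where
  "feasible_flow n nl m src tgt p x \<longleftrightarrow>
     (\<forall>e. m \<le> e \<longrightarrow> x e = 0) \<and>
     (\<forall>v. nl \<le> v \<and> v < n \<longrightarrow> (\<Sum>e<m. incid src tgt v e * x e) = (if v = p then -1 else 0))"

definition flow_obj :: "nat \<Rightarrow> (nat \<Rightarrow> real) \<Rightarrow> real \<Rightarrow> (nat \<Rightarrow> real) \<Rightarrow> real" where
  "flow_obj m d lam x = (1/2) * (\<Sum>e<m. d e * ((x e)\<^sup>2 + lam * \<bar>x e\<bar>))"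

definition flow :: "nat \<Rightarrow> nat \<Rightarrow> nat \<Rightarrow> (nat \<Rightarrow> nat) \<Rightarrow> (nat \<Rightarrow> nat) \<Rightarrow> (nat \<Rightarrow> real) \<Rightarrow> nat \<Rightarrow> real \<Rightarrow> (nat \<Rightarrow> real)" where
  "flow n nl m src tgt d p lam = (THE x. feasible_flow n nl m src tgt p x \<and>
     (\<forall>y. feasible_flow n nl m src tgt p y \<longrightarrow> flow_obj m d lam x \<le> flow_obj m d lam y))"

definition flow_weight :: "nat \<Rightarrow> nat \<Rightarrow> nat \<Rightarrow> (nat \<Rightarrow> nat) \<Rightarrow> (nat \<Rightarrow> nat) \<Rightarrow> (nat \<Rightarrow> real) \<Rightarrow> nat \<Rightarrow> real \<Rightarrow> nat \<Rightarrow> real" where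
  "flow_weight n nl m src tgt d p lam i = (\<Sum>e<m. incid src tgt i e * flow n nl m src tgt d p lam e)"

definition flow_pred :: "nat \<Rightarrow> nat \<Rightarrow> nat \<Rightarrow> (nat \<Rightarrow> nat) \<Rightarrow> (nat \<Rightarrow> nat) \<Rightarrow> (nat \<Rightarrow> real) \<Rightarrow> (nat \<Rightarrow> real) \<Rightarrow> nat \<Rightarrow> real \<Rightarrow> real" where
  "flow_pred n nl m src tgt d f p lam = (\<Sum>i<nl. flow_weight n nl m src tgt d p lam i * f i)"

end

theory Submission
  imports Defs
begin

locale G =
  fixes n nl m p :: nat and src tgt :: "nat \<Rightarrow> nat" and d :: "nat \<Rightarrow> real"
    and vs0 es0 :: "nat list"
  assumes nl1: "1 \<le> nl" and nln: "nl < n"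
    and edges: "\<forall>e < m. src e < n \<and> tgt e < n \<and> src e \<noteq> tgt e"
    and dpos: "\<forall>e < m. d e > 0"
    and conn: "connected_graph n m src tgt"
    and pl: "nl \<le> p" and pn: "p < n"
    and lp: "lab_path nl m src tgt p vs0 es0"
    and uniq: "\<forall>vs es. lab_path nl m src tgt p vs es \<and> (vs, es) \<noteq> (vs0, es0)
                 \<longrightarrow> path_cost d es0 < path_cost d es"
begin

inductive walk :: "nat \<Rightarrow> nat \<Rightarrow> real \<Rightarrow> bool" where
  wnil: "walk u u 0"
| wf: "walk u w c \<Longrightarrow> e < m \<Longrightarrow> src e = w \<Longrightarrow> walk u (tgt e) (c + d e)"
| wb: "walk u w c \<Longrightarrow> e < m \<Longrightarrow> tgt e = w \<Longrightarrow> walk u (src e) (c + d e)"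

lemma walk_nonneg: "walk u v c \<Longrightarrow> 0 \<le> c \<and> (u \<noteq> v \<longrightarrow> (\<exists>e<m. d e \<le> c))"
  by (induction rule: walk.induct) (use dpos in \<open>fastforce+\<close>)

lemma cost_le: "set es \<subseteq> {..<m} \<Longrightarrow> path_cost d (take i es) \<le> path_cost d es"
proof (induction es arbitrary: i)
  case Nil thus ?case by (simp add: path_cost_def)
next
  case (Cons a es)
  have "0 \<le> sum_list (map d es)" using Cons.prems dpos
    by (intro sum_list_nonneg) fastforce
  thus ?case using Cons dpos by (cases i) (auto simp: path_cost_def)
qed

lemma path_edges: "is_path m src tgt vs es \<Longrightarrow> set es \<subseteq> {..<m}"
  unfolding is_path_def by (auto simp: in_set_conv_nth)

lemma path_extend:
  assumes P: "is_path m src tgt vs es" and e: "e < m" and ee: "{src e, tgt e} = {last vs, x}"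
  shows "\<exists>vs' es'. is_path m src tgt vs' es' \<and> hd vs' = hd vs \<and> last vs' = x \<and>
     path_cost d es' \<le> path_cost d es + d e"
proof (cases "x \<in> set vs")
  case True
  then obtain i where i: "i < length vs" "vs ! i = x" by (auto simp: in_set_conv_nth)
  have L: "length vs = length es + 1" using P by (simp add: is_path_def)
  have "is_path m src tgt (take (Suc i) vs) (take i es)"
    using P i L unfolding is_path_def by auto
  moreover have "hd (take (Suc i) vs) = hd vs" using i by (cases vs) auto
  moreover have "last (take (Suc i) vs) = x" using i
    by (subst last_conv_nth) (auto simp: min_def intro: arg_cong[where f="(!) vs"])
  moreover have "path_cost d (take i es) \<le> path_cost d es + d e"
    using cost_le[OF path_edges[OF P], of i] dpos e by fastforce
  ultimately show ?thesis by blast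
next
  case False
  have L: "length vs = length es + 1" using P by (simp add: is_path_def)
  have lv: "last vs = vs ! length es" using L by (cases vs rule: rev_cases) (auto simp: nth_append)
  have "is_path m src tgt (vs @ [x]) (es @ [e])"
    using P L False e ee lv unfolding is_path_def
    by (auto simp: nth_append less_Suc_eq)
  moreover have "hd (vs @ [x]) = hd vs" using L by (cases vs) auto
  moreover have "path_cost d (es @ [e]) \<le> path_cost d es + d e" by (simp add: path_cost_def)
  ultimately show ?thesis by (intro exI[of _ "vs @ [x]"] exI[of _ "es @ [e]"]) simp
qed

lemma walk_shortcut: "walk u v c \<Longrightarrow> \<exists>vs es. is_path m src tgt vs es \<and> hd vs = u \<and> last vs = v \<and> path_cost d es \<le> c"
proof (induction rule: walk.induct)
  case (wnil u)
  show ?case by (rule exI[of _ "[u]"], rule exI[of _ "[]"]) (simp add: is_path_def path_cost_def)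
next
  case (wf u w c e)
  then obtain vs es where "is_path m src tgt vs es" "hd vs = u" "last vs = w" "path_cost d es \<le> c" by blast
  with path_extend[of vs es e "tgt e"] wf show ?case by fastforce
next
  case (wb u w c e)
  then obtain vs es where "is_path m src tgt vs es" "hd vs = u" "last vs = w" "path_cost d es \<le> c" by blast
  with path_extend[of vs es e "src e"] wb show ?case by fastforce
qed

lemma path_walk:
  assumes P: "is_path m src tgt vs es"
  shows "walk (hd vs) (last vs) (path_cost d es)"
proof -
  have L: "length vs = length es + 1" and D: "distinct vs" using P by (auto simp: is_path_def)
  have "k \<le> length es \<Longrightarrow> walk (hd vs) (vs ! k) (path_cost d (take k es))" for k
  proof (induction k)
    case 0
    thus ?case using L by (cases vs) (auto simp: path_cost_def intro: wnil)
  next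
    case (Suc k)
    hence k: "k < length es" by simp
    let ?e = "es ! k"
    have e: "?e < m" "{src ?e, tgt ?e} = {vs ! k, vs ! Suc k}" using P k by (auto simp: is_path_def)
    have ne: "vs ! k \<noteq> vs ! Suc k" using D L k by (simp add: nth_eq_iff_index_eq)
    have pc: "path_cost d (take (Suc k) es) = path_cost d (take k es) + d ?e"
      using k by (simp add: take_Suc_conv_app_nth path_cost_def)
    have IH: "walk (hd vs) (vs ! k) (path_cost d (take k es))" using Suc k by simp
    show ?case
    proof (cases "src ?e = vs ! k")
      case True
      hence "tgt ?e = vs ! Suc k" using e ne by (auto simp: doubleton_eq_iff)
      thus ?thesis using wf[OF IH e(1) True] pc by simp
    next
      case False
      hence "src ?e = vs ! Suc k" "tgt ?e = vs ! k" using e ne by (auto simp: doubleton_eq_iff)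
      thus ?thesis using wb[OF IH e(1)] pc by simp
    qed
  qed
  from this[of "length es"] show ?thesis using L
    by (cases vs rule: rev_cases) (auto simp: nth_append)
qed

lemma conn_walk: "u < n \<Longrightarrow> v < n \<Longrightarrow> \<exists>c. walk u v c"
  using conn path_walk unfolding connected_graph_def by blast

lemma incid_eq: "e < m \<Longrightarrow> incid src tgt w e = (if w = src e then 1 else 0) - (if w = tgt e then 1 else 0)"
  using edges by (auto simp: incid_def)

lemma upd_sum: "e < m \<Longrightarrow> (\<Sum>e'<m. g e' * (x e' + (if e' = e then a else 0))) = (\<Sum>e'<m. g e' * x e') + g e * (a::real)"
  by (simp add: distrib_left sum.distrib if_distrib[of "\<lambda>t. g _ * t"] cong: if_cong)

lemma walk_flow: "walk u v c \<Longrightarrow> \<exists>x. (\<forall>e. m \<le> e \<longrightarrow> x e = 0) \<and>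
   (\<forall>w. (\<Sum>e<m. incid src tgt w e * x e) = (if w = u then 1 else 0) - (if w = v then 1 else 0)) \<and>
   (\<Sum>e<m. d e * \<bar>x e\<bar>) \<le> c"
proof (induction rule: walk.induct)
  case (wnil u)
  show ?case by (rule exI[of _ "\<lambda>_. 0"]) simp
next
  case (wf u w c e)
  then obtain x where x: "\<forall>e. m \<le> e \<longrightarrow> x e = 0"
   "\<forall>w'. (\<Sum>e<m. incid src tgt w' e * x e) = (if w' = u then 1 else 0) - (if w' = w then 1 else 0)"
   "(\<Sum>e<m. d e * \<bar>x e\<bar>) \<le> c" by blast
  define x' where "x' = (\<lambda>e'. x e' + (if e' = e then 1 else 0))"
  have "\<forall>e'. m \<le> e' \<longrightarrow> x' e' = 0" using x(1) wf by (auto simp: x'_def)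
  moreover have "(\<Sum>e<m. incid src tgt w' e * x' e) = (if w' = u then 1 else 0) - (if w' = tgt e then 1 else 0)" for w'
    unfolding x'_def using upd_sum[OF wf(2), of "\<lambda>e. incid src tgt w' e" x 1] x(2) incid_eq[OF wf(2), of w'] wf
    by simp
  moreover have "(\<Sum>e<m. d e * \<bar>x' e\<bar>) \<le> (\<Sum>e'<m. d e' * (\<bar>x e'\<bar> + (if e' = e then 1 else 0)))"
    unfolding x'_def using dpos by (intro sum_mono) (auto intro!: mult_left_mono)
  moreover have "(\<Sum>e'<m. d e' * (\<bar>x e'\<bar> + (if e' = e then 1 else 0))) = (\<Sum>e<m. d e * \<bar>x e\<bar>) + d e"
    using upd_sum[OF wf(2), of d "\<lambda>e. \<bar>x e\<bar>" 1] by simp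
  ultimately show ?case using x(3) by (intro exI[of _ x']) auto
next
  case (wb u w c e)
  then obtain x where x: "\<forall>e. m \<le> e \<longrightarrow> x e = 0"
   "\<forall>w'. (\<Sum>e<m. incid src tgt w' e * x e) = (if w' = u then 1 else 0) - (if w' = w then 1 else 0)"
   "(\<Sum>e<m. d e * \<bar>x e\<bar>) \<le> c" by blast
  define x' where "x' = (\<lambda>e'. x e' + (if e' = e then -1 else 0))"
  have "\<forall>e'. m \<le> e' \<longrightarrow> x' e' = 0" using x(1) wb by (auto simp: x'_def)
  moreover have "(\<Sum>e<m. incid src tgt w' e * x' e) = (if w' = u then 1 else 0) - (if w' = src e then 1 else 0)" for w'
    unfolding x'_def using upd_sum[OF wb(2), of "\<lambda>e. incid src tgt w' e" x "-1"] x(2) incid_eq[OF wb(2), of w'] wb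
    by simp
  moreover have "(\<Sum>e<m. d e * \<bar>x' e\<bar>) \<le> (\<Sum>e'<m. d e' * (\<bar>x e'\<bar> + (if e' = e then 1 else 0)))"
    unfolding x'_def using dpos by (intro sum_mono) (auto intro!: mult_left_mono)
  moreover have "(\<Sum>e'<m. d e' * (\<bar>x e'\<bar> + (if e' = e then 1 else 0))) = (\<Sum>e<m. d e * \<bar>x e\<bar>) + d e"
    using upd_sum[OF wb(2), of d "\<lambda>e. \<bar>x e\<bar>" 1] by simp
  ultimately show ?case using x(3) by (intro exI[of _ x']) auto
qed

definition W :: "(nat \<Rightarrow> real) \<Rightarrow> nat \<Rightarrow> real" where
  "W x i = (\<Sum>e<m. incid src tgt i e * x e)"

definition F1 :: "(nat \<Rightarrow> real) \<Rightarrow> real" where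
  "F1 x = (\<Sum>e<m. d e * \<bar>x e\<bar>)"

abbreviation feas where "feas x \<equiv> feasible_flow n nl m src tgt p x"

lemma flow_identity:
  assumes fx: "feas x"
  shows "(\<Sum>e<m. (\<pi> (tgt e) - \<pi> (src e)) * x e) = \<pi> p - (\<Sum>i<nl. \<pi> i * W x i)"
proof -
  have a: "(\<Sum>v<n. \<pi> v * incid src tgt v e) = \<pi> (src e) - \<pi> (tgt e)" if e: "e < m" for e
  proof -
    have "(\<Sum>v<n. \<pi> v * incid src tgt v e) = (\<Sum>v<n. (if v = src e then \<pi> v else 0) - (if v = tgt e then \<pi> v else 0))"
      using incid_eq[OF e] by (intro sum.cong) auto
    also have "\<dots> = \<pi> (src e) - \<pi> (tgt e)" using edges e by (simp add: sum_subtractf)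
    finally show ?thesis .
  qed
  have "(\<Sum>v<n. \<pi> v * W x v) = (\<Sum>e<m. (\<Sum>v<n. \<pi> v * incid src tgt v e) * x e)"
    unfolding W_def by (simp add: sum_distrib_left sum_distrib_right mult.assoc sum.swap[of _ "{..<n}"])
  also have "\<dots> = (\<Sum>e<m. (\<pi> (src e) - \<pi> (tgt e)) * x e)" using a by simp
  finally have 1: "(\<Sum>v<n. \<pi> v * W x v) = (\<Sum>e<m. (\<pi> (src e) - \<pi> (tgt e)) * x e)" .
  have "(\<Sum>v<n. \<pi> v * W x v) = (\<Sum>v<nl. \<pi> v * W x v) + (\<Sum>v\<in>{nl..<n}. \<pi> v * W x v)"
    using nln by (simp add: lessThan_atLeast0 sum.atLeastLessThan_concat)
  also have "(\<Sum>v\<in>{nl..<n}. \<pi> v * W x v) = (\<Sum>v\<in>{nl..<n}. if v = p then - \<pi> v else 0)"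
    using fx unfolding feasible_flow_def W_def by (intro sum.cong) auto
  also have "\<dots> = - \<pi> p" using pl pn by simp
  finally have 2: "(\<Sum>v<n. \<pi> v * W x v) = (\<Sum>v<nl. \<pi> v * W x v) - \<pi> p" by simp
  have "(\<Sum>e<m. (\<pi> (tgt e) - \<pi> (src e)) * x e) = - (\<Sum>e<m. (\<pi> (src e) - \<pi> (tgt e)) * x e)"
    by (simp add: sum_negf[symmetric] algebra_simps)
  thus ?thesis using 1 2 by simp
qed

lemma W_sum: "feas x \<Longrightarrow> (\<Sum>i<nl. W x i) = 1"
  using flow_identity[of x "\<lambda>_. 1"] by simp

lemma pot_bound:
  assumes fx: "feas x" and lip: "\<forall>e<m. \<bar>\<pi> (src e) - \<pi> (tgt e)\<bar> \<le> d e"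
  shows "\<pi> p - (\<Sum>i<nl. \<pi> i * W x i) \<le> F1 x"
proof -
  have "(\<Sum>e<m. (\<pi> (tgt e) - \<pi> (src e)) * x e) \<le> F1 x"
    unfolding F1_def
  proof (intro sum_mono)
    fix e assume "e \<in> {..<m}"
    hence "\<bar>\<pi> (tgt e) - \<pi> (src e)\<bar> \<le> d e" using lip by (auto simp: abs_minus_commute)
    hence "\<bar>\<pi> (tgt e) - \<pi> (src e)\<bar> * \<bar>x e\<bar> \<le> d e * \<bar>x e\<bar>" by (rule mult_right_mono) simp
    thus "(\<pi> (tgt e) - \<pi> (src e)) * x e \<le> d e * \<bar>x e\<bar>"
      by (metis abs_ge_self abs_mult order_trans)
  qed
  thus ?thesis using flow_identity[OF fx] by simp
qed

definition pot :: "(nat \<Rightarrow> real) \<Rightarrow> nat \<Rightarrow> real" where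
  "pot \<delta> v = Inf {\<delta> j + c | j c. j < nl \<and> walk j v c}"

lemma pot_le:
  assumes "\<forall>j. -B \<le> \<delta> j" "j < nl" "walk j v c"
  shows "pot \<delta> v \<le> \<delta> j + c"
  unfolding pot_def
proof (rule cInf_lower)
  show "\<delta> j + c \<in> {\<delta> j + c |j c. j < nl \<and> walk j v c}" using assms by blast
  show "bdd_below {\<delta> j + c |j c. j < nl \<and> walk j v c}"
  proof (rule bdd_belowI[of _ "-B"])
    fix y assume "y \<in> {\<delta> j + c |j c. j < nl \<and> walk j v c}"
    then obtain j c where "y = \<delta> j + c" "walk j v c" by blast
    moreover have "0 \<le> c" using walk_nonneg[OF \<open>walk j v c\<close>] by blast
    moreover have "-B \<le> \<delta> j" using assms(1) by blast
    ultimately show "-B \<le> y" by linarith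
  qed
qed

lemma pot_ge:
  assumes "v < n" "\<And>j c. j < nl \<Longrightarrow> walk j v c \<Longrightarrow> L \<le> \<delta> j + c"
  shows "L \<le> pot \<delta> v"
  unfolding pot_def
proof (rule cInf_greatest)
  obtain c where "walk 0 v c" using conn_walk[of 0 v] assms nln by auto
  thus "{\<delta> j + c |j c. j < nl \<and> walk j v c} \<noteq> {}" using nl1 by force
qed (use assms in auto)

lemma pot_lip:
  assumes B: "\<forall>j. -B \<le> \<delta> j" and e: "e < m"
  shows "\<bar>pot \<delta> (src e) - pot \<delta> (tgt e)\<bar> \<le> d e"
proof -
  have "pot \<delta> (tgt e) - d e \<le> pot \<delta> (src e)"
    using edges e by (intro pot_ge) (use pot_le[OF B _ wf[OF _ e refl]] in force)+
  moreover have "pot \<delta> (src e) - d e \<le> pot \<delta> (tgt e)"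
    using edges e by (intro pot_ge) (use pot_le[OF B _ wb[OF _ e refl]] in force)+
  ultimately show ?thesis by linarith
qed

abbreviation "i0 \<equiv> hd vs0"
abbreviation "c0 \<equiv> path_cost d es0"

lemma vs0: "is_path m src tgt vs0 es0" "i0 < nl" "last vs0 = p"
  using lp by (auto simp: lab_path_def)

lemma walk_p_ge: "j < nl \<Longrightarrow> walk j p c \<Longrightarrow> c0 \<le> c"
proof -
  assume j: "j < nl" "walk j p c"
  then obtain vs es where P: "is_path m src tgt vs es" "hd vs = j" "last vs = p" "path_cost d es \<le> c"
    using walk_shortcut by blast
  hence "lab_path nl m src tgt p vs es" using j by (simp add: lab_path_def)
  thus ?thesis using uniq P by (cases "(vs, es) = (vs0, es0)") force+
qed

lemma path_bounded:
  assumes P: "is_path m src tgt vs es" "last vs = p"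
  shows "set vs \<subseteq> {..<n} \<and> length vs \<le> n \<and> set es \<subseteq> {..<m} \<and> length es \<le> n"
proof -
    have L: "length vs = length es + 1" and D: "distinct vs" using P by (auto simp: is_path_def)
    have sv: "set vs \<subseteq> {..<n}"
    proof
      fix v assume "v \<in> set vs"
      then obtain k where k: "k < length vs" "v = vs ! k" by (auto simp: in_set_conv_nth)
      show "v \<in> {..<n}"
      proof (cases "k < length es")
        case True
        hence "es ! k < m" "vs ! k \<in> {src (es ! k), tgt (es ! k)}" using P(1) by (auto simp: is_path_def)
        thus ?thesis using edges k by auto
      next
        case False
        hence "k = length es" using k L by simp
        hence "v = last vs" using k L by (subst last_conv_nth) auto
        thus ?thesis using P pn by simp
      qed
    qed
    have "length vs \<le> n" using distinct_card[OF D] card_mono[OF _ sv] by fastforce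
    thus ?thesis using sv path_edges[OF P(1)] L by simp
qed

lemma paths_finite: "finite {(vs, es). is_path m src tgt vs es \<and> last vs = p}"
proof (rule finite_subset)
  show "finite ({vs. set vs \<subseteq> {..<n} \<and> length vs \<le> n} \<times> {es. set es \<subseteq> {..<m} \<and> length es \<le> n})"
    by (intro finite_cartesian_product finite_lists_length_le) auto
  show "{(vs, es). is_path m src tgt vs es \<and> last vs = p} \<subseteq>
    {vs. set vs \<subseteq> {..<n} \<and> length vs \<le> n} \<times> {es. set es \<subseteq> {..<m} \<and> length es \<le> n}"
    using path_bounded by auto
qed

lemma gap:
  assumes k: "k < nl" "k \<noteq> i0"
  shows "\<exists>g>0. \<forall>c. walk k p c \<longrightarrow> c0 + g \<le> c"
proof -
  define Pk where "Pk = (\<lambda>(vs, es). path_cost d es) ` {(vs, es). is_path m src tgt vs es \<and> last vs = p \<and> hd vs = k}"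
  have fin: "finite Pk" unfolding Pk_def
    by (rule finite_imageI, rule finite_subset[OF _ paths_finite]) auto
  obtain vs es where P: "is_path m src tgt vs es" "hd vs = k" "last vs = p"
    using conn k nln pn unfolding connected_graph_def by (meson less_trans)
  hence ne: "Pk \<noteq> {}" unfolding Pk_def by force
  have gt: "c0 < q" if "q \<in> Pk" for q
  proof -
    from that obtain vs es where "is_path m src tgt vs es" "last vs = p" "hd vs = k" "q = path_cost d es"
      unfolding Pk_def by auto
    thus ?thesis using uniq k by (auto simp: lab_path_def)
  qed
  define g where "g = Min Pk - c0"
  have "g > 0" using gt Min_in[OF fin ne] unfolding g_def by force
  moreover have "c0 + g \<le> c" if W: "walk k p c" for c
  proof -
    obtain vs es where "is_path m src tgt vs es" "hd vs = k" "last vs = p" "path_cost d es \<le> c"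
      using walk_shortcut[OF W] by blast
    hence "path_cost d es \<in> Pk" unfolding Pk_def by force
    hence "Min Pk \<le> c" using Min_le[OF fin] \<open>path_cost d es \<le> c\<close> by fastforce
    thus ?thesis unfolding g_def by simp
  qed
  ultimately show ?thesis by blast
qed

lemma sharp_sigma:
  assumes k: "k < nl" "k \<noteq> i0" and s: "0 < s" and sd: "\<forall>e<m. s \<le> d e"
    and sg: "\<forall>c. walk k p c \<longrightarrow> c0 + s \<le> c" and sig: "\<sigma> = 1 \<or> \<sigma> = -1"
    and fx: "feas x"
  shows "c0 - \<sigma> * s * W x k \<le> F1 x"
proof -
  define \<delta> where "\<delta> = (\<lambda>j. if j = k then \<sigma> * s else 0)"
  have B: "\<forall>j. -s \<le> \<delta> j" using sig s by (auto simp: \<delta>_def)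
  have wd: "s \<le> c" if "walk u v c" "u \<noteq> v" for u v c
    using walk_nonneg[OF that(1)] that(2) sd by force
  have pk: "pot \<delta> k = \<sigma> * s"
  proof (rule antisym)
    show "pot \<delta> k \<le> \<sigma> * s" using pot_le[OF B k(1) wnil] by (simp add: \<delta>_def)
    show "\<sigma> * s \<le> pot \<delta> k"
    proof (rule pot_ge)
      show "k < n" using k nln by simp
      fix j c assume "j < nl" "walk j k c"
      thus "\<sigma> * s \<le> \<delta> j + c" using wd[of j k c] walk_nonneg[of j k c] sig s
        by (cases "j = k") (auto simp: \<delta>_def)
    qed
  qed
  have pj: "pot \<delta> j = 0" if j: "j < nl" "j \<noteq> k" for j
  proof (rule antisym)
    show "pot \<delta> j \<le> 0" using pot_le[OF B j(1) wnil] j by (simp add: \<delta>_def)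
    show "0 \<le> pot \<delta> j"
    proof (rule pot_ge)
      show "j < n" using j nln by simp
      fix j' c assume "j' < nl" "walk j' j c"
      thus "0 \<le> \<delta> j' + c" using wd[of j' j c] walk_nonneg[of j' j c] sig s j
        by (cases "j' = k") (auto simp: \<delta>_def)
    qed
  qed
  have pp: "c0 \<le> pot \<delta> p"
  proof (rule pot_ge)
    show "p < n" by (rule pn)
    fix j c assume "j < nl" "walk j p c"
    thus "c0 \<le> \<delta> j + c" using walk_p_ge[of j c] sg sig s
      by (cases "j = k") (auto simp: \<delta>_def)
  qed
  have "(\<Sum>i<nl. pot \<delta> i * W x i) = (\<Sum>i<nl. if i = k then \<sigma> * s * W x k else 0)"
    using pk pj by (intro sum.cong) auto
  also have "\<dots> = \<sigma> * s * W x k" using k by simp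
  finally have "(\<Sum>i<nl. pot \<delta> i * W x i) = \<sigma> * s * W x k" .
  moreover have "pot \<delta> p - (\<Sum>i<nl. pot \<delta> i * W x i) \<le> F1 x"
    using pot_bound[OF fx] pot_lip[OF B] by blast
  ultimately show ?thesis using pp by linarith
qed

lemma sharp:
  assumes k: "k < nl" "k \<noteq> i0"
  shows "\<exists>s>0. \<forall>x. feas x \<longrightarrow> s * \<bar>W x k\<bar> \<le> F1 x - c0"
proof -
  obtain g where g: "g > 0" "\<forall>c. walk k p c \<longrightarrow> c0 + g \<le> c" using gap[OF k] by blast
  define s where "s = Min (insert g (d ` {..<m}))"
  have "s \<in> insert g (d ` {..<m})" unfolding s_def by (rule Min_in) auto
  hence s0: "s > 0" using g dpos by auto
  have sg: "s \<le> g" and sd: "\<forall>e<m. s \<le> d e" unfolding s_def by auto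
  have sw: "\<forall>c. walk k p c \<longrightarrow> c0 + s \<le> c" using g sg by force
  have "s * \<bar>W x k\<bar> \<le> F1 x - c0" if fx: "feas x" for x
    using sharp_sigma[OF k s0 sd sw _ fx, of 1] sharp_sigma[OF k s0 sd sw _ fx, of "-1"]
    by (cases "W x k \<ge> 0") auto
  thus ?thesis using s0 by blast
qed

lemma xs_exists: "\<exists>xs. feas xs \<and> F1 xs \<le> c0"
proof -
  have "walk i0 p c0" using path_walk[OF vs0(1)] vs0(3) by simp
  then obtain x where x: "\<forall>e. m \<le> e \<longrightarrow> x e = 0"
   "\<forall>w. (\<Sum>e<m. incid src tgt w e * x e) = (if w = i0 then 1 else 0) - (if w = p then 1 else 0)"
   "(\<Sum>e<m. d e * \<bar>x e\<bar>) \<le> c0" using walk_flow by blast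
  have "feas x" unfolding feasible_flow_def using x(1,2) vs0(2) by auto
  thus ?thesis using x(3) unfolding F1_def by blast
qed

lemma coord_cont [continuous_intros]: "continuous_on S (\<lambda>x::nat\<Rightarrow>real. x e)"
  by (rule continuous_on_subset[OF continuous_on_product_coordinates]) simp

lemma closed_coord0: "closed {x::nat\<Rightarrow>real. x e = 0}"
proof -
  have "closed {x::nat\<Rightarrow>real. (\<lambda>x. x e) x = (\<lambda>_. 0) x}"
    by (rule closed_Collect_eq) (intro continuous_intros)+
  thus ?thesis by simp
qed

lemma obj_cont: "continuous_on S (flow_obj m d lam)"
  unfolding flow_obj_def by (intro continuous_intros)

lemma minimizer_exists:
  assumes lam: "0 \<le> lam"
  shows "\<exists>x. feas x \<and> (\<forall>y. feas y \<longrightarrow> flow_obj m d lam x \<le> flow_obj m d lam y)"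
proof -
  obtain xs where xs: "feas xs" using xs_exists by blast
  define B where "B = flow_obj m d lam xs"
  define b where "b = (\<lambda>e. 2 * B / d e + 1)"
  define K where "K = (Pi\<^sub>E UNIV (\<lambda>e. if e < m then {-b e..b e} else {0::real}))"
  define C where "C = {x. feas x \<and> flow_obj m d lam x \<le> B}"
  have "compactin (product_topology (\<lambda>i. euclidean) UNIV) K"
    unfolding K_def by (subst compactin_PiE) auto
  hence cK: "compact K" by (simp add: euclidean_product_topology)
  have clC: "closed C" unfolding C_def feasible_flow_def
  proof (intro closed_Collect_conj)
    show "closed {x::nat\<Rightarrow>real. \<forall>e. m \<le> e \<longrightarrow> x e = 0}"
      by (intro closed_Collect_all closed_Collect_imp open_Collect_const closed_coord0)
    show "closed {x::nat\<Rightarrow>real. \<forall>v. nl \<le> v \<and> v < n \<longrightarrow> (\<Sum>e<m. incid src tgt v e * x e) = (if v = p then -1 else 0)}"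
      by (intro closed_Collect_all closed_Collect_imp open_Collect_const closed_Collect_eq continuous_intros)
    show "closed {x. flow_obj m d lam x \<le> B}"
      by (intro closed_Collect_le obj_cont continuous_intros)
  qed
  have CK: "C \<subseteq> K"
  proof
    fix x assume "x \<in> C"
    hence fx: "feas x" and ob: "flow_obj m d lam x \<le> B" by (auto simp: C_def)
    have "x e \<in> (if e < m then {-b e..b e} else {0})" for e
    proof (cases "e < m")
      case True
      have "d e * (x e)\<^sup>2 \<le> d e * ((x e)\<^sup>2 + lam * \<bar>x e\<bar>)"
        using dpos True lam by (intro mult_left_mono) auto
      also have "\<dots> \<le> (\<Sum>e<m. d e * ((x e)\<^sup>2 + lam * \<bar>x e\<bar>))"
        using True dpos lam by (intro member_le_sum) (auto intro!: mult_nonneg_nonneg add_nonneg_nonneg)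
      also have "\<dots> \<le> 2 * B" using ob by (simp add: flow_obj_def)
      finally have "(x e)\<^sup>2 \<le> 2 * B / d e" using dpos True by (simp add: field_simps)
      moreover have "\<bar>x e\<bar> \<le> (x e)\<^sup>2 + 1"
      proof (cases "\<bar>x e\<bar> \<le> 1")
        case True thus ?thesis using zero_le_power2[of "x e"] by linarith
      next
        case False
        hence "\<bar>x e\<bar> * 1 \<le> \<bar>x e\<bar> * \<bar>x e\<bar>" by (intro mult_left_mono) auto
        thus ?thesis by (simp add: power2_eq_square)
      qed
      ultimately show ?thesis using True by (auto simp: b_def abs_le_iff)
    next
      case False thus ?thesis using fx by (auto simp: feasible_flow_def)
    qed
    thus "x \<in> K" by (auto simp: K_def PiE_iff)
  qed
  have cC: "compact C" using compact_Int_closed[OF cK clC] CK by (simp add: Int_absorb1)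
  have "xs \<in> C" using xs by (simp add: C_def B_def)
  then obtain x where x: "x \<in> C" "\<forall>y\<in>C. flow_obj m d lam x \<le> flow_obj m d lam y"
    using continuous_attains_inf[OF cC _ obj_cont] by blast
  have "flow_obj m d lam x \<le> flow_obj m d lam y" if "feas y" for y
    using x that by (cases "flow_obj m d lam y \<le> B") (auto simp: C_def)
  thus ?thesis using x by (auto simp: C_def)
qed

lemma pt_ineq:
  fixes a b lam dd :: real
  assumes "0 \<le> lam" "0 \<le> dd"
  shows "dd * (((a+b)/2)\<^sup>2 + lam * \<bar>(a+b)/2\<bar>) \<le>
     (dd * (a\<^sup>2 + lam * \<bar>a\<bar>) + dd * (b\<^sup>2 + lam * \<bar>b\<bar>)) / 2 - dd * (a - b)\<^sup>2 / 4"
proof -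
  have "\<bar>(a+b)/2\<bar> \<le> (\<bar>a\<bar> + \<bar>b\<bar>)/2" by (simp add: abs_triangle_ineq)
  hence h: "lam * \<bar>(a+b)/2\<bar> \<le> lam * ((\<bar>a\<bar> + \<bar>b\<bar>)/2)" using assms by (intro mult_left_mono) auto
  have "((a+b)/2)\<^sup>2 + lam * \<bar>(a+b)/2\<bar> \<le> ((a\<^sup>2 + lam * \<bar>a\<bar>) + (b\<^sup>2 + lam * \<bar>b\<bar>)) / 2 - (a - b)\<^sup>2 / 4"
    using h by (simp add: power2_eq_square field_simps)
  hence "dd * (((a+b)/2)\<^sup>2 + lam * \<bar>(a+b)/2\<bar>) \<le> dd * (((a\<^sup>2 + lam * \<bar>a\<bar>) + (b\<^sup>2 + lam * \<bar>b\<bar>)) / 2 - (a - b)\<^sup>2 / 4)"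
    using assms by (intro mult_left_mono) auto
  thus ?thesis by (simp add: algebra_simps)
qed

lemma minimizer_unique:
  assumes lam: "0 \<le> lam" and fx: "feas x" and fy: "feas y"
    and mx: "\<forall>z. feas z \<longrightarrow> flow_obj m d lam x \<le> flow_obj m d lam z"
    and my: "\<forall>z. feas z \<longrightarrow> flow_obj m d lam y \<le> flow_obj m d lam z"
  shows "x = y"
proof -
  define z where "z = (\<lambda>e. (x e + y e) / 2)"
  have fz: "feas z"
    using fx fy unfolding feasible_flow_def z_def
    by (auto simp: distrib_left sum.distrib sum_divide_distrib[symmetric] add_divide_distrib[symmetric] mult.commute[of _ "_ / 2"] times_divide_eq_right)
  have "flow_obj m d lam z \<le> 1/2 * (\<Sum>e<m. (d e * ((x e)\<^sup>2 + lam * \<bar>x e\<bar>) + d e * ((y e)\<^sup>2 + lam * \<bar>y e\<bar>)) / 2 - d e * (x e - y e)\<^sup>2 / 4)"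
    unfolding flow_obj_def z_def using pt_ineq[OF lam] dpos
    by (intro mult_left_mono sum_mono) (auto simp: less_imp_le)
  also have "\<dots> = (flow_obj m d lam x + flow_obj m d lam y) / 2 - (\<Sum>e<m. d e * (x e - y e)\<^sup>2) / 8"
  proof -
    let ?A = "\<lambda>e. d e * ((x e)\<^sup>2 + lam * \<bar>x e\<bar>)" and ?B = "\<lambda>e. d e * ((y e)\<^sup>2 + lam * \<bar>y e\<bar>)"
      and ?C = "\<lambda>e. d e * (x e - y e)\<^sup>2"
    have "(\<Sum>e<m. (?A e + ?B e) / 2 - ?C e / 4) = ((\<Sum>e<m. ?A e) + (\<Sum>e<m. ?B e)) / 2 - (\<Sum>e<m. ?C e) / 4"
      by (simp add: sum_subtractf sum.distrib sum_divide_distrib[symmetric])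
    thus ?thesis unfolding flow_obj_def by simp
  qed
  finally have h1: "flow_obj m d lam z \<le> (flow_obj m d lam x + flow_obj m d lam y) / 2 - (\<Sum>e<m. d e * (x e - y e)\<^sup>2) / 8" .
  have key: "\<And>a b c s::real. a \<le> (b + c)/2 - s/8 \<Longrightarrow> b \<le> a \<Longrightarrow> b \<le> c \<Longrightarrow> c \<le> b \<Longrightarrow> s \<le> 0"
    by argo
  have "(\<Sum>e<m. d e * (x e - y e)\<^sup>2) \<le> 0"
    by (rule key[OF h1 mx[rule_format, OF fz] mx[rule_format, OF fy] my[rule_format, OF fx]])
  moreover have nn: "\<forall>e\<in>{..<m}. 0 \<le> d e * (x e - y e)\<^sup>2" using dpos by (auto simp: less_imp_le)
  ultimately have "(\<Sum>e<m. d e * (x e - y e)\<^sup>2) = 0"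
    using sum_nonneg[of "{..<m}" "\<lambda>e. d e * (x e - y e)\<^sup>2"] by (metis antisym)
  hence z0: "\<forall>e\<in>{..<m}. d e * (x e - y e)\<^sup>2 = 0"
    using sum_nonneg_eq_0_iff[OF finite_lessThan[of m], of "\<lambda>e. d e * (x e - y e)\<^sup>2"] nn by simp
  show ?thesis
  proof (rule ext)
    fix e show "x e = y e"
    proof (cases "e < m")
      case True
      hence "d e * (x e - y e)\<^sup>2 = 0" "d e > 0" using z0 dpos by auto
      thus ?thesis by simp
    next
      case False thus ?thesis using fx fy by (auto simp: feasible_flow_def)
    qed
  qed
qed

lemma flow_spec:
  assumes "0 \<le> lam"
  shows "feas (flow n nl m src tgt d p lam) \<and>
    (\<forall>y. feas y \<longrightarrow> flow_obj m d lam (flow n nl m src tgt d p lam) \<le> flow_obj m d lam y)"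
proof -
  have "\<exists>!x. feas x \<and> (\<forall>y. feas y \<longrightarrow> flow_obj m d lam x \<le> flow_obj m d lam y)"
    using minimizer_exists[OF assms] minimizer_unique[OF assms] by blast
  from theI'[OF this] show ?thesis unfolding flow_def .
qed

abbreviation "fl lam \<equiv> flow n nl m src tgt d p lam"

lemma obj_split: "flow_obj m d lam x = ((\<Sum>e<m. d e * (x e)\<^sup>2) + lam * F1 x) / 2"
  unfolding flow_obj_def F1_def
  by (simp add: distrib_left sum.distrib sum_distrib_left algebra_simps)

lemma W_bound:
  assumes k: "k < nl" "k \<noteq> i0"
  shows "\<exists>C. \<forall>lam>0. \<bar>W (fl lam) k\<bar> \<le> C / lam"
proof -
  obtain xs where xs: "feas xs" "F1 xs \<le> c0" using xs_exists by blast
  obtain s where s: "s > 0" "\<forall>x. feas x \<longrightarrow> s * \<bar>W x k\<bar> \<le> F1 x - c0" using sharp[OF k] by blast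
  define Qs where "Qs = (\<Sum>e<m. d e * (xs e)\<^sup>2)"
  have "\<bar>W (fl lam) k\<bar> \<le> (Qs / s) / lam" if lam: "lam > 0" for lam
  proof -
    let ?x = "fl lam"
    have fs: "feas ?x" "flow_obj m d lam ?x \<le> flow_obj m d lam xs"
      using flow_spec[of lam] lam xs by auto
    have Q0: "0 \<le> (\<Sum>e<m. d e * (?x e)\<^sup>2)" using dpos by (intro sum_nonneg) (auto simp: less_imp_le)
    have "lam * F1 xs \<le> lam * c0" using xs lam by (intro mult_left_mono) auto
    moreover have "(\<Sum>e<m. d e * (?x e)\<^sup>2) + lam * F1 ?x \<le> Qs + lam * F1 xs"
      using fs(2) unfolding obj_split Qs_def by simp
    ultimately have "lam * F1 ?x \<le> Qs + lam * c0" using Q0 by linarith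
    hence "lam * (F1 ?x - c0) \<le> Qs" by (simp add: algebra_simps)
    moreover have "lam * (s * \<bar>W ?x k\<bar>) \<le> lam * (F1 ?x - c0)" using s fs lam by (intro mult_left_mono) auto
    ultimately have "(lam * s) * \<bar>W ?x k\<bar> \<le> Qs" by (simp add: mult.assoc)
    thus ?thesis using lam s by (simp add: field_simps)
  qed
  thus ?thesis by blast
qed

lemma lim_W:
  assumes i: "i < nl"
  shows "((\<lambda>lam. W (fl lam) i) \<longlongrightarrow> (if i = i0 then 1 else 0)) at_top"
proof -
  have other: "((\<lambda>lam. W (fl lam) k) \<longlongrightarrow> 0) at_top" if k: "k < nl" "k \<noteq> i0" for k
  proof -
    obtain C where C: "\<forall>lam>0. \<bar>W (fl lam) k\<bar> \<le> C / lam" using W_bound[OF k] by blast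
    have lim: "((\<lambda>lam::real. C / lam) \<longlongrightarrow> 0) at_top"
      by (rule tendsto_divide_0[OF tendsto_const filterlim_at_top_imp_at_infinity[OF filterlim_ident]])
    have ev: "eventually (\<lambda>lam. norm (W (fl lam) k) \<le> C / lam) at_top"
      unfolding eventually_at_top_linorder using C by (intro exI[of _ 1]) auto
    show ?thesis by (rule Lim_null_comparison[OF ev lim])
  qed
  show ?thesis
  proof (cases "i = i0")
    case False thus ?thesis using other i by simp
  next
    case True
    have "((\<lambda>lam. 1 - (\<Sum>k\<in>{..<nl} - {i0}. W (fl lam) k)) \<longlongrightarrow> 1 - (\<Sum>k\<in>{..<nl} - {i0}. 0)) at_top"
      by (intro tendsto_diff tendsto_const tendsto_sum other) auto
    hence "((\<lambda>lam. 1 - (\<Sum>k\<in>{..<nl} - {i0}. W (fl lam) k)) \<longlongrightarrow> 1) at_top" by simp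
    moreover have "eventually (\<lambda>lam. 1 - (\<Sum>k\<in>{..<nl} - {i0}. W (fl lam) k) = W (fl lam) i0) at_top"
    proof (rule eventually_mono[OF eventually_ge_at_top[of 0]])
      fix lam :: real assume "0 \<le> lam"
      hence "(\<Sum>k<nl. W (fl lam) k) = 1" using flow_spec W_sum by blast
      moreover have "(\<Sum>k<nl. W (fl lam) k) = W (fl lam) i0 + (\<Sum>k\<in>{..<nl} - {i0}. W (fl lam) k)"
        using vs0(2) by (simp add: sum.remove)
      ultimately show "1 - (\<Sum>k\<in>{..<nl} - {i0}. W (fl lam) k) = W (fl lam) i0" by simp
    qed
    ultimately show ?thesis using True Lim_transform_eventually by fastforce
  qed
qed

lemma main:
  shows "((\<lambda>lam. flow_weight n nl m src tgt d p lam i0) \<longlongrightarrow> 1) at_top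
     \<and> (\<forall>i < nl. i \<noteq> i0 \<longrightarrow> ((\<lambda>lam. flow_weight n nl m src tgt d p lam i) \<longlongrightarrow> 0) at_top)
     \<and> ((\<lambda>lam. flow_pred n nl m src tgt d f p lam) \<longlongrightarrow> f i0) at_top"
proof -
  have fw: "flow_weight n nl m src tgt d p lam i = W (fl lam) i" for lam i
    by (simp add: flow_weight_def W_def)
  have "((\<lambda>lam. \<Sum>i<nl. W (fl lam) i * f i) \<longlongrightarrow> (\<Sum>i<nl. (if i = i0 then 1 else 0) * f i)) at_top"
    by (intro tendsto_sum tendsto_mult_right lim_W) auto
  moreover have "(\<Sum>i<nl. (if i = i0 then 1 else 0) * f i) = (\<Sum>i<nl. if i0 = i then f i else 0)"
    by (intro sum.cong) auto
  moreover have "\<dots> = f i0" using vs0(2) by simp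
  ultimately have "((\<lambda>lam. flow_pred n nl m src tgt d f p lam) \<longlongrightarrow> f i0) at_top"
    by (simp add: flow_pred_def fw)
  moreover have "((\<lambda>lam. W (fl lam) i) \<longlongrightarrow> 0) at_top" if "i < nl" "i \<noteq> i0" for i
    using lim_W[OF that(1)] that(2) by simp
  ultimately show ?thesis using lim_W[OF vs0(2)] by (simp add: fw)
qed

end

theorem proposition2:
  fixes n nl m p :: nat and src tgt :: "nat \<Rightarrow> nat" and d f :: "nat \<Rightarrow> real"
    and vs0 es0 :: "nat list"
  assumes "1 \<le> nl" and "nl < n"
    and "\<forall>e < m. src e < n \<and> tgt e < n \<and> src e \<noteq> tgt e"
    and "\<forall>e < m. d e > 0"
    and "connected_graph n m src tgt"
    and "nl \<le> p" and "p < n"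
    and "lab_path nl m src tgt p vs0 es0"
    and "\<forall>vs es. lab_path nl m src tgt p vs es \<and> (vs, es) \<noteq> (vs0, es0)
                 \<longrightarrow> path_cost d es0 < path_cost d es"
  shows "((\<lambda>lam. flow_weight n nl m src tgt d p lam (hd vs0)) \<longlongrightarrow> 1) at_top
     \<and> (\<forall>i < nl. i \<noteq> hd vs0 \<longrightarrow> ((\<lambda>lam. flow_weight n nl m src tgt d p lam i) \<longlongrightarrow> 0) at_top)
     \<and> ((\<lambda>lam. flow_pred n nl m src tgt d f p lam) \<longlongrightarrow> f (hd vs0)) at_top"
  proof -
  interpret G n nl m p src tgt d vs0 es0 using assms by unfold_locales
  show ?thesis by (rule main)
qed

end
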